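(* Let $\iota:M(\mathbb R(y))\to M(\mathbb R(x,y))$ be an injective map compatible with restriction such that all places in the image of $\iota$ have the same restriction to $\mathbb R(x)$. Suppose that for some $\xi\in\mathrm{im}(\iota)$ with $\xi(x)=a\in\mathbb R$ and $\xi(y)=b\in\mathbb R$ there is $n\in\mathbb N$ with $0<v_\xi(x-a)<n\,v_\xi(y-b)$. Then $\iota$ is not continuous. The same holds if $\xi(x)=\infty$ and $x-a$ is replaced by $1/x$, and/or $\xi(y)=\infty$ and $y-b$ is replaced by $1/y$.
   Context: For a field $K$, $M(K)$ is the set of $\mathbb R$-places $K\to\mathbb R\cup\{\infty\}$, with topology generated by the subbasis $H'(b)=\{\zeta\in M(K)\mid \infty\ne\zeta(b)>0\}$, $b\in K$. $\iota$ is compatible with restriction if $\iota(\zeta)|_{\mathbb R(y)}=\zeta$ for all $\zeta$. $v_\xi$ denotes the valuation associated with the place $\xi$, with values in an ordered abelian group. *)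

theory Defs
  imports "HOL-Analysis.Analysis" "HOL-Computational_Algebra.Polynomial" "HOL-Computational_Algebra.Fraction_Field"
begin

text \<open>R-places K \<rightarrow> R \<union> {\<infinity>}; \<infinity> is represented by None.
  The preimage of R is a valuation ring, and the place is a ring homomorphism on it
  whose kernel is its maximal ideal.\<close>
definition real_place :: "('k::field \<Rightarrow> real option) \<Rightarrow> bool" where
  "real_place \<phi> \<longleftrightarrow>
     \<phi> 0 = Some 0 \<and> \<phi> 1 = Some 1 \<and>
     (\<forall>a b. \<phi> a \<noteq> None \<and> \<phi> b \<noteq> None \<longrightarrow>
        \<phi> (a + b) = Some (the (\<phi> a) + the (\<phi> b)) \<and>
        \<phi> (a * b) = Some (the (\<phi> a) * the (\<phi> b))) \<and>
     (\<forall>a. a \<noteq> 0 \<longrightarrow> (\<phi> a = None \<longleftrightarrow> \<phi> (inverse a) = Some 0))"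

definition places :: "('k::field \<Rightarrow> real option) set" where
  "places = {\<phi>. real_place \<phi>}"

definition Hsub :: "'k::field \<Rightarrow> ('k \<Rightarrow> real option) set" where
  "Hsub b = {\<zeta> \<in> places. \<exists>r. \<zeta> b = Some r \<and> r > 0}"

definition place_topology :: "('k::field \<Rightarrow> real option) topology" where
  "place_topology = topology_generated_by (range Hsub)"

text \<open>Strict comparison of values of the valuation v_\<xi> attached to the place \<xi>:
  val_less \<xi> f g means v_\<xi>(f) < v_\<xi>(g) (with v_\<xi>(0) = \<infinity>), i.e. g/f lies in the
  maximal ideal of the valuation ring of \<xi>.\<close>
definition val_less :: "('k::field \<Rightarrow> real option) \<Rightarrow> 'k \<Rightarrow> 'k \<Rightarrow> bool" where
  "val_less \<xi> f g \<longleftrightarrow> f \<noteq> 0 \<and> \<xi> (g / f) = Some 0"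

text \<open>R(y) = Frac(R[y]); R(x,y) = Frac(R(y)[x]).\<close>
type_synonym Ry = "real poly fract"
type_synonym Rxy = "Ry poly fract"

definition y1 :: Ry where "y1 = Fract [:0, 1:] 1"
definition const1 :: "real \<Rightarrow> Ry" where "const1 c = Fract [:c:] 1"

definition emb_y :: "Ry \<Rightarrow> Rxy" where "emb_y f = Fract [:f:] 1"

definition xvar :: Rxy where "xvar = Fract [:0, 1:] 1"
definition yvar :: Rxy where "yvar = emb_y y1"
definition const2 :: "real \<Rightarrow> Rxy" where "const2 c = emb_y (const1 c)"

definition Rx_sub :: "Rxy set" where
  "Rx_sub = {Fract (map_poly const1 p) (map_poly const1 q) | p q. q \<noteq> 0}"

definition loc_par :: "(Rxy \<Rightarrow> real option) \<Rightarrow> Rxy \<Rightarrow> Rxy" where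
  "loc_par \<xi> t = (case \<xi> t of Some a \<Rightarrow> t - const2 a | None \<Rightarrow> inverse t)"

end

theory Submission imports Defs begin

context fixes \<phi> :: "'k::field \<Rightarrow> real option" assumes pl: "real_place \<phi>"
begin

lemma pl0: "\<phi> 0 = Some 0" and pl1: "\<phi> 1 = Some 1"
  using pl unfolding real_place_def by auto

lemma pl_add: "\<phi> a = Some s \<Longrightarrow> \<phi> b = Some t \<Longrightarrow> \<phi> (a + b) = Some (s + t)"
  using pl unfolding real_place_def by force

lemma pl_mult: "\<phi> a = Some s \<Longrightarrow> \<phi> b = Some t \<Longrightarrow> \<phi> (a * b) = Some (s * t)"
  using pl unfolding real_place_def by force

lemma pl_inv_ax: "a \<noteq> 0 \<Longrightarrow> (\<phi> a = None \<longleftrightarrow> \<phi> (inverse a) = Some 0)"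
  using pl unfolding real_place_def by blast

lemma pl_m1: "\<phi> (-1) = Some (-1)"
proof (cases "\<phi> (-1)")
  case None
  then have "\<phi> (inverse (-1)) = Some 0" using pl_inv_ax[of "-1"] by simp
  then show ?thesis using None by simp
next
  case (Some s)
  have "\<phi> (1 + -1) = Some (1 + s)" using pl_add[OF pl1 Some] .
  then show ?thesis using pl0 Some by simp
qed

lemma pl_uminus: "\<phi> a = Some s \<Longrightarrow> \<phi> (- a) = Some (- s)"
  using pl_mult[OF pl_m1, of a s] by simp

lemma pl_diff: "\<phi> a = Some s \<Longrightarrow> \<phi> b = Some t \<Longrightarrow> \<phi> (a - b) = Some (s - t)"
  using pl_add[of a s "-b" "-t"] pl_uminus[of b t] by simp

lemma pl_nonzero: "\<phi> a = Some s \<Longrightarrow> s \<noteq> 0 \<Longrightarrow> a \<noteq> 0"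
  using pl0 by auto

lemma pl_None_nonzero: "\<phi> a = None \<Longrightarrow> a \<noteq> 0"
  using pl0 by auto

lemma pl_inverse: "\<phi> a = Some s \<Longrightarrow> s \<noteq> 0 \<Longrightarrow> \<phi> (inverse a) = Some (inverse s)"
proof -
  assume a: "\<phi> a = Some s" "s \<noteq> 0"
  then have a0: "a \<noteq> 0" using pl0 by auto
  show ?thesis
  proof (cases "\<phi> (inverse a)")
    case None
    then have "\<phi> (inverse (inverse a)) = Some 0" using pl_inv_ax[of "inverse a"] a0 by simp
    then show ?thesis using a by simp
  next
    case (Some r)
    have "\<phi> (a * inverse a) = Some (s * r)" using pl_mult[OF a(1) Some] .
    then have "s * r = 1" using a0 pl1 by simp
    then show ?thesis using Some a(2) by (simp add: field_simps)
  qed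
qed

lemma pl_inverse0: "a \<noteq> 0 \<Longrightarrow> \<phi> a = Some 0 \<Longrightarrow> \<phi> (inverse a) = None"
  using pl_inv_ax[of "inverse a"] by simp

lemma pl_inverseNone: "\<phi> a = None \<Longrightarrow> \<phi> (inverse a) = Some 0"
  using pl_inv_ax[of a] pl_None_nonzero by blast

lemma pl_divide: "\<phi> a = Some s \<Longrightarrow> \<phi> b = Some t \<Longrightarrow> t \<noteq> 0 \<Longrightarrow> \<phi> (a / b) = Some (s / t)"
  using pl_mult[OF _ pl_inverse] by (simp add: divide_inverse)

lemma pl_power: "\<phi> a = Some s \<Longrightarrow> \<phi> (a ^ n) = Some (s ^ n)"
  by (induction n) (simp_all add: pl1 pl_mult)

lemma pl_None_add: "\<phi> a = None \<Longrightarrow> \<phi> b = Some t \<Longrightarrow> \<phi> (a + b) = None"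
proof (rule ccontr)
  assume a: "\<phi> a = None" "\<phi> b = Some t" "\<phi> (a + b) \<noteq> None"
  then obtain r where "\<phi> (a + b) = Some r" by auto
  from pl_diff[OF this a(2)] a(1) show False by simp
qed

lemma pl_None_mult: "\<phi> a = None \<Longrightarrow> \<phi> b = Some t \<Longrightarrow> t \<noteq> 0 \<Longrightarrow> \<phi> (a * b) = None"
proof (rule ccontr)
  assume a: "\<phi> a = None" "\<phi> b = Some t" "t \<noteq> 0" "\<phi> (a * b) \<noteq> None"
  then obtain r where r: "\<phi> (a * b) = Some r" by auto
  have b0: "b \<noteq> 0" using a pl0 by auto
  from pl_divide[OF r a(2,3)] a(1) b0 show False by simp
qed

lemma pl_None_mult_None: "\<phi> a = None \<Longrightarrow> \<phi> b = None \<Longrightarrow> \<phi> (a * b) = None"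
proof -
  assume a: "\<phi> a = None" "\<phi> b = None"
  have "\<phi> (inverse (a * b)) = Some 0"
    using pl_mult[OF pl_inverseNone[OF a(1)] pl_inverseNone[OF a(2)]] by (simp add: mult.commute)
  moreover have "a * b \<noteq> 0" using a pl_None_nonzero by simp
  ultimately show ?thesis using pl_inv_ax by blast
qed

end


section \<open>Constants in R(y)\<close>

lemma const1_add: "const1 (a + b) = const1 a + const1 b"
  by (simp add: const1_def)
lemma const1_mult: "const1 (a * b) = const1 a * const1 b"
  by (simp add: const1_def mult.commute)
lemma const1_0 [simp]: "const1 0 = 0"
  by (simp add: const1_def Zero_fract_def)
lemma const1_1 [simp]: "const1 1 = 1"
  by (simp add: const1_def One_fract_def one_pCons)
lemma const1_uminus: "const1 (- a) = - const1 a"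
  by (simp add: const1_def)
lemma const1_diff: "const1 (a - b) = const1 a - const1 b"
  by (simp add: const1_def)
lemma const1_inverse: "const1 (inverse a) = inverse (const1 a)"
proof (cases "a = 0")
  case True then show ?thesis by simp
next
  case False
  then show ?thesis by (simp add: const1_def eq_fract)
qed
lemma const1_divide: "const1 (a / b) = const1 a / const1 b"
  by (simp add: divide_inverse const1_mult const1_inverse)
lemma const1_power: "const1 (a ^ n) = const1 a ^ n"
  by (induction n) (simp_all add: const1_mult)
lemma const1_of_nat: "const1 (of_nat n) = of_nat n"
  by (induction n) (simp_all add: const1_add)
lemma const1_eq0: "const1 a = 0 \<longleftrightarrow> a = 0"
  by (simp add: const1_def Zero_fract_def eq_fract)

context fixes \<zeta> :: "Ry \<Rightarrow> real option" assumes pl: "real_place \<zeta>"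
begin

lemma c_nat: "\<zeta> (const1 (of_nat n)) = Some (of_nat n)"
  by (induction n) (simp_all add: pl0[OF pl] pl1[OF pl] const1_add pl_add[OF pl])

lemma c_finite: "\<zeta> (const1 c) \<noteq> None"
proof
  assume cN: "\<zeta> (const1 c) = None"
  then have c0: "c \<noteq> 0" using pl0[OF pl] by auto
  have "\<zeta> (const1 (c^2)) = None"
    using pl_None_mult_None[OF pl cN cN] by (simp add: power2_eq_square const1_mult)
  then have i0: "\<zeta> (const1 (inverse (c^2))) = Some 0"
    using pl_inverseNone[OF pl] const1_inverse by metis
  obtain N :: nat where N: "c^2 \<le> real N" using real_arch_simple by blast
  define r where "r = sqrt (real N - c^2) / c"
  have req: "r * r + 1 = real N * inverse (c^2)"
    using N c0 unfolding r_def by (simp add: field_simps power2_eq_square)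
  have "\<zeta> (const1 (real N * inverse (c^2))) = Some 0"
    using pl_mult[OF pl c_nat i0] by (simp add: const1_mult)
  then have Z: "\<zeta> (const1 r * const1 r + 1) = Some 0"
    using req by (metis const1_add const1_mult const1_1)
  show False
  proof (cases "\<zeta> (const1 r)")
    case None
    then have "\<zeta> (const1 r * const1 r + 1) = None"
      using pl_None_add[OF pl pl_None_mult_None[OF pl None None] pl1[OF pl]] by simp
    then show False using Z by simp
  next
    case (Some s)
    then have "\<zeta> (const1 r * const1 r + 1) = Some (s * s + 1)"
      using pl_add[OF pl pl_mult[OF pl Some Some] pl1[OF pl]] by simp
    moreover have "s * s + 1 \<noteq> 0" by (metis add_pos_nonneg zero_less_one zero_le_square less_irrefl add.commute)
    ultimately show False using Z by simp
  qed
qed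

definition fv :: "real \<Rightarrow> real" where "fv c = the (\<zeta> (const1 c))"

lemma fv: "\<zeta> (const1 c) = Some (fv c)"
  using c_finite[of c] unfolding fv_def by auto

lemma fv_add: "fv (a + b) = fv a + fv b"
  using pl_add[OF pl fv fv, of a b] fv[of "a+b"] by (simp add: const1_add)
lemma fv_mult: "fv (a * b) = fv a * fv b"
  using pl_mult[OF pl fv fv, of a b] fv[of "a*b"] by (simp add: const1_mult)
lemma fv_uminus: "fv (- a) = - fv a"
  using pl_uminus[OF pl fv, of a] fv[of "-a"] by (simp add: const1_uminus)
lemma fv_nat: "fv (of_nat n) = of_nat n"
  using c_nat[of n] fv[of "of_nat n"] by simp
lemma fv_int: "fv (of_int k) = of_int k"
proof (cases "k \<ge> 0")
  case True then show ?thesis using fv_nat[of "nat k"] by simp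
next
  case False
  then have "of_int k = - real (nat (-k))" by simp
  then show ?thesis using fv_nat[of "nat (-k)"] fv_uminus False by simp
qed
lemma fv_nonneg: "c \<ge> 0 \<Longrightarrow> fv c \<ge> 0"
  using fv_mult[of "sqrt c" "sqrt c"] by simp
lemma fv_mono: "a \<le> b \<Longrightarrow> fv a \<le> fv b"
  using fv_nonneg[of "b - a"] fv_add[of a "b - a"] by simp
lemma fv_rat: "q \<in> \<rat> \<Longrightarrow> fv q = q"
proof -
  assume "q \<in> \<rat>"
  then obtain a b where ab: "b > 0" "q = of_int a / of_int b" by (auto elim!: Rats_cases')
  have "q * of_int b = of_int a" using ab by simp
  then have "fv q * of_int b = of_int a" using fv_mult[of q "of_int b"] fv_int by metis
  then have "fv q = of_int a / of_int b" using ab(1) by (simp add: field_simps)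
  then show ?thesis using ab(2) by simp
qed
lemma fv_id: "fv c = c"
proof (rule ccontr)
  assume ne: "fv c \<noteq> c"
  show False
  proof (cases "fv c < c")
    case True
    then obtain q where q: "q \<in> \<rat>" "fv c < q" "q < c" using Rats_dense_in_real by blast
    then show False using fv_mono[of q c] fv_rat by simp
  next
    case False
    then have "c < fv c" using ne by simp
    then obtain q where q: "q \<in> \<rat>" "c < q" "q < fv c" using Rats_dense_in_real by blast
    then show False using fv_mono[of c q] fv_rat by simp
  qed
qed

lemma place_const: "\<zeta> (const1 c) = Some c"
  using fv fv_id by simp

end


definition peval :: "real poly \<Rightarrow> Ry \<Rightarrow> Ry" where
  "peval P u = poly (map_poly const1 P) u"

lemma peval_pCons: "peval (pCons a P) u = const1 a + u * peval P u"
  by (simp add: peval_def map_poly_pCons)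

lemma peval_0 [simp]: "peval 0 u = 0"
  by (simp add: peval_def)

lemma map_poly_const1_add: "map_poly const1 (p + q) = map_poly const1 p + map_poly const1 q"
  by (intro poly_eqI) (simp add: coeff_map_poly const1_add)

lemma peval_add: "peval (P + Q) u = peval P u + peval Q u"
  by (simp add: peval_def map_poly_const1_add)

lemma peval_smult: "peval (smult a P) u = const1 a * peval P u"
  by (simp add: peval_def map_poly_smult const1_mult)

lemma peval_mult: "peval (P * Q) u = peval P u * peval Q u"
  by (induction P rule: pCons_induct) (simp_all add: peval_pCons peval_add peval_smult algebra_simps)

lemma peval_const: "peval [:a:] u = const1 a"
  by (simp add: peval_pCons)

lemma peval_X: "peval [:0, 1:] u = u"
  by (simp add: peval_pCons)

lemma peval_Xpow: "peval ([:0, 1:] ^ k) u = u ^ k"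
proof (induction k)
  case 0 then show ?case using peval_const[of 1 u] by (simp add: one_pCons)
next
  case (Suc k) then show ?case using peval_mult[of "[:0,1:]" "[:0,1:]^k" u] peval_X by simp
qed

lemma peval_monom: "peval (monom a n) u = const1 a * u ^ n"
  by (simp add: peval_def map_poly_monom poly_monom)

lemma place_peval:
  assumes "real_place \<zeta>" "\<zeta> u = Some t"
  shows "\<zeta> (peval P u) = Some (poly P t)"
  by (induction P rule: pCons_induct)
     (simp_all add: peval_pCons pl0[OF assms(1)] place_const[OF assms(1)] pl_add[OF assms(1)]
        pl_mult[OF assms(1)] assms(2))

lemma Fract_peval_y1: "Fract p 1 = peval p y1"
proof (induction p rule: pCons_induct)
  case 0 then show ?case by (simp add: Zero_fract_def)
next
  case (pCons a p)
  have e1: "pCons a p = [:a:] + pCons 0 p" by simp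
  have e2: "[:0,1:] * p = pCons 0 p" by simp
  have e: "pCons a p = [:a:] + [:0,1:] * p" unfolding e2 by (rule e1)
  have "Fract [:a:] 1 + Fract [:0,1:] 1 * Fract p 1 = Fract ([:a:] + [:0,1:] * p) 1"
    by simp
  then have "Fract (pCons a p) 1 = Fract [:a:] 1 + Fract [:0,1:] 1 * Fract p 1"
    by (simp only: e)
  then show ?case using pCons by (simp add: peval_pCons const1_def y1_def)
qed

section \<open>Evaluation places\<close>

definition ev :: "real \<Rightarrow> Ry \<Rightarrow> real option" where
  "ev c h = (if \<exists>p q. h = Fract p q \<and> poly q c \<noteq> 0 then
     Some (let pq = SOME pq. h = Fract (fst pq) (snd pq) \<and> poly (snd pq) c \<noteq> 0
           in poly (fst pq) c / poly (snd pq) c) else None)"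

lemma ev_eq:
  assumes "h = Fract p q" "poly q c \<noteq> 0"
  shows "ev c h = Some (poly p c / poly q c)"
proof -
  have ex: "\<exists>pq. h = Fract (fst pq) (snd pq) \<and> poly (snd pq) c \<noteq> 0"
    using assms by (intro exI[of _ "(p, q)"]) simp
  define pq where "pq = (SOME pq. h = Fract (fst pq) (snd pq) \<and> poly (snd pq) c \<noteq> 0)"
  have pq: "h = Fract (fst pq) (snd pq)" "poly (snd pq) c \<noteq> 0"
    using someI_ex[OF ex] unfolding pq_def by auto
  have q0: "q \<noteq> 0" "snd pq \<noteq> 0" using assms pq by auto
  have "p * snd pq = fst pq * q"
    using pq(1) assms(1) eq_fract(1)[OF q0(1) q0(2)] by simp
  then have "poly p c * poly (snd pq) c = poly (fst pq) c * poly q c"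
    by (metis poly_mult)
  then have "poly (fst pq) c / poly (snd pq) c = poly p c / poly q c"
    using assms(2) pq(2) by (simp add: field_simps)
  moreover have "\<exists>p q. h = Fract p q \<and> poly q c \<noteq> 0" using assms by blast
  ultimately show ?thesis unfolding ev_def pq_def[symmetric] by (simp add: Let_def)
qed

lemma ev_Some_rep:
  assumes "ev c h = Some s"
  obtains p q where "h = Fract p q" "poly q c \<noteq> 0" "s = poly p c / poly q c"
proof -
  have "\<exists>p q. h = Fract p q \<and> poly q c \<noteq> 0"
    using assms unfolding ev_def by (auto split: if_splits)
  then obtain p q where "h = Fract p q" "poly q c \<noteq> 0" by blast
  with ev_eq[OF this] assms that show ?thesis by simp
qed

lemma reduced_rep:
  fixes h :: Ry
  obtains p q where "h = Fract p q" "q \<noteq> 0" "poly p c \<noteq> 0 \<or> poly q c \<noteq> 0"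
proof -
  obtain p q where pq: "h = Fract p q" "q \<noteq> 0" by (cases h) auto
  show ?thesis
  proof (cases "p = 0")
    case True
    then have "h = Fract 0 1" using pq eq_fract(3) by simp
    then show ?thesis using that[of 0 1] by simp
  next
    case False
    obtain p1 where p1: "p = [:-c,1:] ^ order c p * p1" "\<not> [:-c,1:] dvd p1"
      using order_decomp[OF False] by blast
    obtain q1 where q1: "q = [:-c,1:] ^ order c q * q1" "\<not> [:-c,1:] dvd q1"
      using order_decomp[OF pq(2)] by blast
    have p1c: "poly p1 c \<noteq> 0" "poly q1 c \<noteq> 0" using p1(2) q1(2) poly_eq_0_iff_dvd by auto
    have q10: "q1 \<noteq> 0" using q1 pq(2) by auto
    define L :: "real poly" where "L = [:-c,1:]"
    have L0: "L \<noteq> 0" unfolding L_def by simp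
    show ?thesis
    proof (cases "order c p \<le> order c q")
      case True
      define d where "d = order c q - order c p"
      have qd: "q = L ^ order c p * (L ^ d * q1)"
        using q1(1) True unfolding d_def L_def by (metis le_add_diff_inverse mult.assoc power_add)
      have pd: "p = L ^ order c p * p1" using p1 unfolding L_def by simp
      have "p * (L ^ d * q1) = p1 * q" by (subst pd, subst qd) (simp only: mult_ac)
      moreover have "L ^ d * q1 \<noteq> 0" using L0 q10 by simp
      ultimately have "Fract p q = Fract p1 (L ^ d * q1)"
        using eq_fract(1)[OF pq(2), of "L ^ d * q1" p p1] by blast
      then have "h = Fract p1 (L ^ d * q1)" using pq(1) by simp
      moreover have "L ^ d * q1 \<noteq> 0" using L0 q10 by simp
      ultimately show ?thesis using that p1c by blast
    next
      case False
      define d where "d = order c p - order c q"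
      have pd: "p = L ^ order c q * (L ^ d * p1)"
        using p1(1) False unfolding d_def L_def by (metis le_add_diff_inverse nat_le_linear mult.assoc power_add)
      have qd: "q = L ^ order c q * q1" using q1 unfolding L_def by simp
      have "p * q1 = (L ^ d * p1) * q" by (subst pd, subst qd) (simp only: mult_ac)
      then have "Fract p q = Fract (L ^ d * p1) q1"
        using eq_fract(1)[OF pq(2) q10, of p "L ^ d * p1"] by blast
      then have "h = Fract (L ^ d * p1) q1" using pq(1) by simp
      then show ?thesis using that q10 p1c by blast
    qed
  qed
qed

lemma ev_0: "ev c 0 = Some 0" using ev_eq[of 0 0 1 c] by (simp add: Zero_fract_def)
lemma ev_1: "ev c 1 = Some 1" using ev_eq[of 1 1 1 c] by (simp add: One_fract_def)

lemma ev_addmult: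
  assumes st: "ev c a = Some s" "ev c b = Some t"
  shows "ev c (a + b) = Some (s + t) \<and> ev c (a * b) = Some (s * t)"
proof -
  obtain p q where a: "a = Fract p q" "poly q c \<noteq> 0" "s = poly p c / poly q c"
    using ev_Some_rep[OF st(1)] by blast
  obtain p' q' where b: "b = Fract p' q'" "poly q' c \<noteq> 0" "t = poly p' c / poly q' c"
    using ev_Some_rep[OF st(2)] by blast
  have q0: "q \<noteq> 0" "q' \<noteq> 0" using a(2) b(2) by auto
  have e1: "a + b = Fract (p * q' + p' * q) (q * q')" using a(1) b(1) q0 by simp
  have pc: "poly (q * q') c \<noteq> 0" using a(2) b(2) by simp
  have "ev c (a + b) = Some (poly (p * q' + p' * q) c / poly (q * q') c)"
    by (rule ev_eq[OF e1 pc])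
  moreover have "poly (p * q' + p' * q) c / poly (q * q') c = s + t"
    unfolding a(3) b(3) using a(2) b(2) by (simp add: field_simps)
  moreover have e2: "a * b = Fract (p * p') (q * q')" using a(1) b(1) by simp
  have "ev c (a * b) = Some (poly (p * p') c / poly (q * q') c)"
    by (rule ev_eq[OF e2 pc])
  moreover have "poly (p * p') c / poly (q * q') c = s * t"
    unfolding a(3) b(3) by simp
  ultimately show ?thesis by simp
qed

lemma ev_inv:
  fixes a :: Ry assumes a0: "a \<noteq> 0"
  shows "ev c a = None \<longleftrightarrow> ev c (inverse a) = Some 0"
proof -
  obtain p q where r: "a = Fract p q" "q \<noteq> 0" "poly p c \<noteq> 0 \<or> poly q c \<noteq> 0"
    using reduced_rep by blast
  have p0: "p \<noteq> 0" using r a0 eq_fract(3)[of q 1] by (auto simp: Zero_fract_def)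
  have inv: "inverse a = Fract q p" using r by simp
  show "ev c a = None \<longleftrightarrow> ev c (inverse a) = Some 0"
  proof
    assume N: "ev c a = None"
    then have "poly q c = 0" using ev_eq[OF r(1)] by fastforce
    then show "ev c (inverse a) = Some 0" using r(3) ev_eq[OF inv] by simp
  next
    assume I: "ev c (inverse a) = Some 0"
    show "ev c a = None"
    proof (rule ccontr)
      assume "ev c a \<noteq> None"
      then obtain s where s: "ev c a = Some s" by auto
      obtain p2 q2 where a2: "a = Fract p2 q2" "poly q2 c \<noteq> 0" "s = poly p2 c / poly q2 c"
        using ev_Some_rep[OF s] by blast
      obtain p3 q3 where a3: "inverse a = Fract p3 q3" "poly q3 c \<noteq> 0" "0 = poly p3 c / poly q3 c"
        using ev_Some_rep[OF I] by blast
      have p30: "p3 \<noteq> 0"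
      proof
        assume "p3 = 0"
        then have "inverse a = 0" using a3(1) eq_fract(3)[of q3 1] by (simp add: Zero_fract_def)
        then show False using a0 by simp
      qed
      have q20: "q2 \<noteq> 0" "q3 \<noteq> 0" using a2 a3 by auto
      have "a = Fract q3 p3" using a3(1) by (metis inverse_fract inverse_inverse_eq)
      then have "Fract p2 q2 = Fract q3 p3" using a2(1) by simp
      then have "p2 * p3 = q3 * q2" using eq_fract(1)[OF q20(1) p30, of p2 q3] by blast
      then have "poly p2 c * poly p3 c = poly q3 c * poly q2 c" by (metis poly_mult)
      moreover have "poly p3 c = 0" using a3(2,3) by simp
      ultimately show False using a2(2) a3(2) by simp
    qed
  qed
qed

lemma ev_place: "real_place (ev c)"
  unfolding real_place_def using ev_0 ev_1 ev_addmult ev_inv by force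

lemma ev_places: "ev c \<in> places"
  unfolding places_def using ev_place by blast



lemma ev_y1: "ev c y1 = Some c"
  using ev_eq[OF y1_def, of c] by simp

lemma rep_fin: "Fract p 1 = peval (pcompose p [:b,1:]) (y1 - const1 b)"
proof (induction p rule: pCons_induct)
  case 0 then show ?case by (simp add: Zero_fract_def)
next
  case (pCons a p)
  have "Fract (pCons a p) 1 = const1 a + y1 * Fract p 1"
    using Fract_peval_y1[of "pCons a p"] Fract_peval_y1[of p] by (simp add: peval_pCons)
  also have "\<dots> = const1 a + (const1 b + (y1 - const1 b)) * peval (pcompose p [:b,1:]) (y1 - const1 b)"
    using pCons by simp
  also have "\<dots> = peval (pcompose (pCons a p) [:b,1:]) (y1 - const1 b)"
    by (simp only: pcompose_pCons peval_add peval_mult peval_const) (simp add: peval_pCons)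
  finally show ?case .
qed

lemma rep_inf: "\<exists>P k. Fract p 1 * inverse y1 ^ k = peval P (inverse y1)"
proof (induction p rule: pCons_induct)
  case 0 then show ?case by (intro exI[of _ 0]) (simp add: Zero_fract_def)
next
  case (pCons a p)
  then obtain P k where Pk: "Fract p 1 * inverse y1 ^ k = peval P (inverse y1)" by blast
  have y0: "y1 \<noteq> 0" by (simp add: y1_def Zero_fract_def eq_fract)
  have "Fract (pCons a p) 1 = const1 a + y1 * Fract p 1"
    using Fract_peval_y1[of "pCons a p"] Fract_peval_y1[of p] by (simp add: peval_pCons)
  then have "Fract (pCons a p) 1 * inverse y1 ^ Suc k
      = const1 a * inverse y1 ^ Suc k + (y1 * inverse y1) * (Fract p 1 * inverse y1 ^ k)"
    by (simp add: algebra_simps)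
  also have "\<dots> = peval (monom a (Suc k) + P) (inverse y1)"
    using y0 Pk by (simp add: peval_add peval_monom)
  finally show ?case by blast
qed

lemma rep_gen:
  assumes R: "\<And>p. \<exists>P k. Fract p 1 * u ^ k = peval P u" and u0: "u \<noteq> 0"
  shows "\<exists>P Q. peval Q u \<noteq> 0 \<and> h * peval Q u = peval P u"
proof -
  obtain p q where pq: "h = Fract p q" "q \<noteq> 0" by (cases h) auto
  have hq: "h * Fract q 1 = Fract p 1" using pq by (simp add: eq_fract)
  obtain P k where P: "Fract p 1 * u ^ k = peval P u" using R by blast
  obtain Q j where Q: "Fract q 1 * u ^ j = peval Q u" using R by blast
  have q1: "Fract q 1 \<noteq> 0" using pq(2) by (simp add: Zero_fract_def eq_fract)
  have "peval (Q * [:0,1:] ^ k) u = Fract q 1 * u ^ j * u ^ k"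
    using Q by (simp add: peval_mult peval_Xpow)
  moreover have "Fract q 1 * u ^ j * u ^ k \<noteq> 0" using q1 u0 by simp
  moreover have "h * (Fract q 1 * u ^ j * u ^ k) = peval (P * [:0,1:] ^ j) u"
  proof -
    have "h * (Fract q 1 * u ^ j * u ^ k) = (h * Fract q 1) * u ^ k * u ^ j" by (simp add: algebra_simps)
    also have "\<dots> = peval P u * u ^ j" using hq P by simp
    finally show ?thesis by (simp add: peval_mult peval_Xpow)
  qed
  ultimately show ?thesis by metis
qed

section \<open>Neighbourhoods\<close>

lemma poly_decomp0:
  fixes P :: "real poly"
  assumes "P \<noteq> 0"
  obtains m P1 where "P = [:0,1:] ^ m * P1" "poly P1 0 \<noteq> 0"
proof -
  obtain P1 where "P = [:- 0, 1:] ^ order 0 P * P1" "\<not> [:- 0, 1:] dvd P1"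
    using order_decomp[OF assms] by blast
  then show ?thesis using that poly_eq_0_iff_dvd[of P1 0] by auto
qed

lemma nbhd:
  assumes z0: "real_place \<zeta>0" "\<zeta>0 u = Some 0"
    and Z: "\<And>t. t \<noteq> 0 \<Longrightarrow> real_place (Z t) \<and> Z t u = Some t"
    and rep: "\<And>h. \<exists>P Q. peval Q u \<noteq> 0 \<and> h * peval Q u = peval P u"
    and h: "\<zeta>0 h = Some r" "r > 0"
  shows "eventually (\<lambda>t. t \<noteq> 0 \<and> (\<exists>r'. Z t h = Some r' \<and> r' > 0)) (at 0)"
proof -
  obtain P Q where PQ: "peval Q u \<noteq> 0" "h * peval Q u = peval P u" using rep by blast
  have h0: "h \<noteq> 0" using pl_nonzero[OF z0(1) h(1)] h(2) by simp
  have Z1: "real_place (Z 1)" "Z 1 u = Some 1" using Z[of 1] by auto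
  have u0: "u \<noteq> 0" using Z1 pl0[OF Z1(1)] by auto
  have P0: "P \<noteq> 0" using PQ h0 by auto
  have Q0: "Q \<noteq> 0" using PQ by auto
  obtain m P1 where P1: "P = [:0,1:] ^ m * P1" "poly P1 0 \<noteq> 0" using poly_decomp0[OF P0] by blast
  obtain k Q1 where Q1: "Q = [:0,1:] ^ k * Q1" "poly Q1 0 \<noteq> 0" using poly_decomp0[OF Q0] by blast
  define p1 where "p1 = peval P1 u"
  define q1 where "q1 = peval Q1 u"
  have eq: "h * (u ^ k * q1) = u ^ m * p1"
    using PQ(2) unfolding P1(1) Q1(1) p1_def q1_def by (simp add: peval_mult peval_Xpow)
  have zp: "\<zeta>0 p1 = Some (poly P1 0)" unfolding p1_def by (rule place_peval[OF z0])
  have zq: "\<zeta>0 q1 = Some (poly Q1 0)" unfolding q1_def by (rule place_peval[OF z0])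
  have mk: "m = k"
  proof (rule ccontr)
    assume "m \<noteq> k"
    then consider "k < m" | "m < k" by linarith
    then show False
    proof cases
      case 1
      then have "u ^ m = u ^ k * u ^ (m - k)" by (simp add: power_add[symmetric])
      then have "h * q1 = u ^ (m - k) * p1" using eq u0 by (simp add: algebra_simps)
      moreover have "\<zeta>0 (h * q1) = Some (r * poly Q1 0)" using pl_mult[OF z0(1) h(1) zq] .
      moreover have "\<zeta>0 (u ^ (m - k) * p1) = Some (0 ^ (m - k) * poly P1 0)"
        using pl_mult[OF z0(1) pl_power[OF z0(1) z0(2)] zp] .
      ultimately show False using 1 h(2) Q1(2) by (simp add: power_0_left)
    next
      case 2
      then have "u ^ k = u ^ m * u ^ (k - m)" by (simp add: power_add[symmetric])
      then have "u ^ (k - m) * (h * q1) = p1" using eq u0 by (simp add: algebra_simps)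
      moreover have "\<zeta>0 (u ^ (k - m) * (h * q1)) = Some (0 ^ (k - m) * (r * poly Q1 0))"
        using pl_mult[OF z0(1) pl_power[OF z0(1) z0(2)] pl_mult[OF z0(1) h(1) zq]] .
      ultimately show False using 2 P1(2) zp by (simp add: power_0_left)
    qed
  qed
  then have hq: "h * q1 = p1" using eq u0 by simp
  have rr: "r * poly Q1 0 = poly P1 0"
    using pl_mult[OF z0(1) h(1) zq] hq zp by simp
  define f where "f t = poly P1 t / poly Q1 t" for t
  have "(f \<longlongrightarrow> f 0) (at 0)"
    unfolding f_def using Q1(2) by (intro tendsto_intros) auto
  moreover have "f 0 = r" unfolding f_def using rr Q1(2) by (simp add: field_simps)
  ultimately have ev1: "eventually (\<lambda>t. f t > 0) (at 0)" using h(2) order_tendstoD(1) by metis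
  have "(poly Q1 \<longlongrightarrow> poly Q1 0) (at 0)" by (intro tendsto_intros)
  then have ev2: "eventually (\<lambda>t. poly Q1 t \<noteq> 0) (at 0)"
    using tendsto_imp_eventually_ne Q1(2) by blast
  have ev3: "eventually (\<lambda>t::real. t \<noteq> 0) (at 0)" by (simp add: eventually_at_filter)
  show ?thesis
  proof (rule eventually_mono[OF eventually_conj[OF ev1 eventually_conj[OF ev2 ev3]]])
    fix t assume t: "0 < f t \<and> poly Q1 t \<noteq> 0 \<and> t \<noteq> 0"
    have Zt: "real_place (Z t)" "Z t u = Some t" using Z t by auto
    have zp': "Z t p1 = Some (poly P1 t)" unfolding p1_def by (rule place_peval[OF Zt])
    have zq': "Z t q1 = Some (poly Q1 t)" unfolding q1_def by (rule place_peval[OF Zt])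
    show "t \<noteq> 0 \<and> (\<exists>r'. Z t h = Some r' \<and> r' > 0)"
    proof (cases "Z t h")
      case None
      then have "Z t (h * q1) = None" using pl_None_mult[OF Zt(1) None zq'] t by simp
      then show ?thesis using hq zp' by simp
    next
      case (Some r')
      have "Z t (h * q1) = Some (r' * poly Q1 t)" using pl_mult[OF Zt(1) Some zq'] .
      then have "r' * poly Q1 t = poly P1 t" using hq zp' by simp
      then have "r' = f t" unfolding f_def using t by (simp add: field_simps)
      then show ?thesis using t Some by simp
    qed
  qed
qed

lemma gen_nbhd:
  assumes U: "generate_topology_on (range Hsub) U" "\<zeta>0 \<in> U"
    and z0: "real_place \<zeta>0" "\<zeta>0 u = Some 0"
    and Z: "\<And>t. t \<noteq> 0 \<Longrightarrow> real_place (Z t) \<and> Z t u = Some t"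
    and rep: "\<And>h. \<exists>P Q. peval Q u \<noteq> 0 \<and> h * peval Q u = peval P u"
  shows "eventually (\<lambda>t. Z t \<in> U) (at 0)"
  using U
proof (induction rule: generate_topology_on.induct)
  case Empty then show ?case by simp
next
  case (Int a b)
  then show ?case by (auto intro: eventually_conj[THEN eventually_mono])
next
  case (UN K)
  then obtain k where k: "k \<in> K" "\<zeta>0 \<in> k" by auto
  then have "eventually (\<lambda>t. Z t \<in> k) (at 0)" using UN.IH by blast
  then show ?case by (rule eventually_mono) (use k in auto)
next
  case (Basis s)
  then obtain h where s: "s = Hsub h" by auto
  then obtain r where r: "\<zeta>0 h = Some r" "r > 0" using Basis.prems by (auto simp: Hsub_def)
  show ?case
    using nbhd[OF z0 Z rep r]
    by (rule eventually_mono) (use Z in \<open>auto simp: s Hsub_def places_def\<close>)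
qed


lemma emb_y_diff: "emb_y (a - b) = emb_y a - emb_y b"
  by (simp add: emb_y_def)

lemma emb_y_inverse: "emb_y (inverse a) = inverse (emb_y a)"
proof (cases "a = 0")
  case True
  have "emb_y 0 = 0" by (simp add: emb_y_def fract_collapse)
  then show ?thesis using True by simp
next
  case False then show ?thesis by (simp add: emb_y_def eq_fract)
qed

lemma xpar_Rx_fin: "xvar - const2 a \<in> Rx_sub"
proof -
  have m1: "map_poly const1 [:-a, 1:] = [:- const1 a, 1:]"
    by (simp add: map_poly_pCons const1_uminus)
  have "xvar - const2 a = Fract [:- const1 a, 1:] 1"
    by (simp add: xvar_def const2_def emb_y_def)
  also have "\<dots> = Fract (map_poly const1 [:-a, 1:]) (map_poly const1 1)"
    using m1 by simp
  finally have "xvar - const2 a = Fract (map_poly const1 [:-a, 1:]) (map_poly const1 1)" .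
  moreover have "(1::real poly) \<noteq> 0" by simp
  ultimately show ?thesis unfolding Rx_sub_def by blast
qed

lemma xpar_Rx_inf: "inverse xvar \<in> Rx_sub"
proof -
  have m1: "map_poly const1 [:0, 1:] = [:0, 1:]"
    by (simp add: map_poly_pCons)
  have "inverse xvar = Fract 1 [:0, 1:]"
    by (simp add: xvar_def)
  also have "\<dots> = Fract (map_poly const1 1) (map_poly const1 [:0, 1:])"
    using m1 by simp
  finally show ?thesis unfolding Rx_sub_def by fastforce
qed

lemma loc_par_x_Rx: "loc_par \<xi> xvar \<in> Rx_sub"
  unfolding loc_par_def using xpar_Rx_fin xpar_Rx_inf by (auto split: option.split)

theorem proposition6p4:
  fixes \<iota> :: "(Ry \<Rightarrow> real option) \<Rightarrow> (Rxy \<Rightarrow> real option)"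
  assumes maps: "\<iota> ` places \<subseteq> places"
    and inj: "inj_on \<iota> places"
    and compat: "\<And>\<zeta> f. \<zeta> \<in> places \<Longrightarrow> \<iota> \<zeta> (emb_y f) = \<zeta> f"
    and same_x: "\<And>\<zeta>1 \<zeta>2 g. \<zeta>1 \<in> places \<Longrightarrow> \<zeta>2 \<in> places \<Longrightarrow> g \<in> Rx_sub \<Longrightarrow> \<iota> \<zeta>1 g = \<iota> \<zeta>2 g"
    and xi: "\<xi> \<in> \<iota> ` places"
    and n: "val_less \<xi> 1 (loc_par \<xi> xvar) \<and> val_less \<xi> (loc_par \<xi> xvar) ((loc_par \<xi> yvar) ^ (n::nat))"
  shows "\<not> continuous_map place_topology place_topology \<iota>"
proof
  assume cont: "continuous_map place_topology place_topology \<iota>"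
  obtain \<zeta>0 where z0: "\<zeta>0 \<in> places" "\<xi> = \<iota> \<zeta>0" using xi by blast
  have z0p: "real_place \<zeta>0" using z0 by (simp add: places_def)
  have xip: "\<xi> \<in> places" using maps z0 by auto
  define X where "X = loc_par \<xi> xvar"
  define Y where "Y = loc_par \<xi> yvar"
  have X0: "\<xi> X = Some 0" using n unfolding X_def val_less_def by simp
  have Xn0: "X \<noteq> 0" and YX: "\<xi> (Y ^ n / X) = Some 0"
    using n unfolding X_def Y_def val_less_def by auto
  have XR: "X \<in> Rx_sub" unfolding X_def by (rule loc_par_x_Rx)
  have y1\<zeta>: "\<zeta>0 y1 = \<xi> yvar" using compat[OF z0(1), of y1] z0(2) by (simp add: yvar_def)
  obtain u Z where uZ: "Y = emb_y u" "\<zeta>0 u = Some 0"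
      "\<And>t. t \<noteq> 0 \<Longrightarrow> real_place (Z t) \<and> Z t u = Some t"
      "\<And>p. \<exists>P k. Fract p 1 * u ^ k = peval P u"
  proof (cases "\<xi> yvar")
    case (Some b)
    show ?thesis
    proof (rule that[of "y1 - const1 b" "\<lambda>t. ev (b + t)"])
      show "Y = emb_y (y1 - const1 b)"
        unfolding Y_def loc_par_def using Some by (simp add: emb_y_diff yvar_def const2_def)
      show "\<zeta>0 (y1 - const1 b) = Some 0"
        using pl_diff[OF z0p, of y1 b "const1 b" b] y1\<zeta> Some place_const[OF z0p] by simp
      fix t :: real
      show "real_place (ev (b + t)) \<and> ev (b + t) (y1 - const1 b) = Some t"
        using pl_diff[OF ev_place ev_y1 place_const[OF ev_place], of "b + t" b] ev_place by simp
    next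
      fix p show "\<exists>P k. Fract p 1 * (y1 - const1 b) ^ k = peval P (y1 - const1 b)"
        using rep_fin[of p b] by (metis mult_1_right power_0)
    qed
  next
    case None
    show ?thesis
    proof (rule that[of "inverse y1" "\<lambda>t. ev (inverse t)"])
      show "Y = emb_y (inverse y1)"
        unfolding Y_def loc_par_def using None by (simp add: emb_y_inverse yvar_def)
      show "\<zeta>0 (inverse y1) = Some 0"
        using pl_inverseNone[OF z0p] y1\<zeta> None by simp
      fix t :: real assume t: "t \<noteq> 0"
      show "real_place (ev (inverse t)) \<and> ev (inverse t) (inverse y1) = Some t"
        using pl_inverse[OF ev_place ev_y1, of "inverse t"] t ev_place by simp
    next
      fix p show "\<exists>P k. Fract p 1 * inverse y1 ^ k = peval P (inverse y1)"
        by (rule rep_inf)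
    qed
  qed
  have Z1: "real_place (Z 1)" "Z 1 u = Some 1" using uZ(3)[of 1] by auto
  have u0: "u \<noteq> 0" using Z1 pl0[OF Z1(1)] by auto
  have rep: "\<And>h. \<exists>P Q. peval Q u \<noteq> 0 \<and> h * peval Q u = peval P u"
    using rep_gen[OF uZ(4) u0] by blast
  define f where "f = 1 - Y ^ n / X"
  have xipl: "real_place \<xi>" using xip by (simp add: places_def)
  have xif: "\<xi> f = Some 1" using pl_diff[OF xipl pl1[OF xipl] YX] unfolding f_def by simp
  have "openin (place_topology :: (Rxy \<Rightarrow> real option) topology) (Hsub f)"
    unfolding place_topology_def by (rule topology_generated_by_Basis) simp
  then have "openin (place_topology :: (Ry \<Rightarrow> real option) topology) {x \<in> topspace place_topology. \<iota> x \<in> Hsub f}"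
    using cont unfolding continuous_map_def by blast
  then have gen: "generate_topology_on (range Hsub) {x \<in> topspace (place_topology :: (Ry \<Rightarrow> real option) topology). \<iota> x \<in> Hsub f}"
    unfolding place_topology_def by (rule openin_topology_generated_by)
  have top: "topspace (place_topology :: (Ry \<Rightarrow> real option) topology) = \<Union> (range Hsub)"
    unfolding place_topology_def by simp
  have "\<zeta>0 \<in> Hsub 1" using z0(1) pl1[OF z0p] by (simp add: Hsub_def)
  then have "\<zeta>0 \<in> topspace (place_topology :: (Ry \<Rightarrow> real option) topology)" unfolding top by blast
  moreover have "\<iota> \<zeta>0 \<in> Hsub f" using xip xif z0(2) by (simp add: Hsub_def)
  ultimately have z0V: "\<zeta>0 \<in> {x \<in> topspace (place_topology :: (Ry \<Rightarrow> real option) topology). \<iota> x \<in> Hsub f}" by simp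
  have evV: "eventually (\<lambda>t. Z t \<in> {x \<in> topspace (place_topology :: (Ry \<Rightarrow> real option) topology). \<iota> x \<in> Hsub f}) (at (0::real))"
    by (rule gen_nbhd[OF gen z0V z0p uZ(2) uZ(3) rep])
  have ev: "eventually (\<lambda>t. \<iota> (Z t) \<in> Hsub f) (at (0::real))"
    by (rule eventually_mono[OF evV]) simp
  have ev3: "eventually (\<lambda>t::real. t \<noteq> 0) (at 0)" by (simp add: eventually_at_filter)
  obtain t where t: "\<iota> (Z t) \<in> Hsub f" "t \<noteq> 0"
    using eventually_happens'[OF _ eventually_conj[OF ev ev3]] trivial_limit_at by blast
  have Zt: "real_place (Z t)" "Z t u = Some t" using uZ(3) t(2) by auto
  have Ztp: "Z t \<in> places" using Zt by (simp add: places_def)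
  define \<psi> where "\<psi> = \<iota> (Z t)"
  have \<psi>p: "real_place \<psi>" using maps Ztp unfolding \<psi>_def places_def by auto
  have \<psi>X: "\<psi> X = Some 0" using same_x[OF Ztp z0(1) XR] z0(2) X0 unfolding \<psi>_def by simp
  have \<psi>Y: "\<psi> Y = Some t" using compat[OF Ztp, of u] uZ(1) Zt unfolding \<psi>_def by simp
  have \<psi>Yn: "\<psi> (Y ^ n) = Some (t ^ n)" using pl_power[OF \<psi>p \<psi>Y] .
  have tn: "t ^ n \<noteq> 0" using t(2) by simp
  have \<psi>XY: "\<psi> (X / Y ^ n) = Some 0" using pl_divide[OF \<psi>p \<psi>X \<psi>Yn tn] by simp
  have Yn0: "Y ^ n \<noteq> 0" using pl_nonzero[OF \<psi>p \<psi>Yn tn] .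
  have XY0: "X / Y ^ n \<noteq> 0" using Xn0 Yn0 by simp
  have "\<psi> (inverse (X / Y ^ n)) = None" using pl_inverse0[OF \<psi>p XY0 \<psi>XY] .
  then have N1: "\<psi> (Y ^ n / X) = None" by simp
  have "\<psi> (Y ^ n / X * (- 1)) = None" using pl_None_mult[OF \<psi>p N1 pl_m1[OF \<psi>p]] by simp
  then have "\<psi> (Y ^ n / X * (- 1) + 1) = None" using pl_None_add[OF \<psi>p _ pl1[OF \<psi>p]] by blast
  moreover have "Y ^ n / X * (- 1) + 1 = f" unfolding f_def by simp
  ultimately have "\<psi> f = None" by simp
  moreover have "\<psi> \<in> Hsub f" using t(1) unfolding \<psi>_def .
  ultimately show False by (simp add: Hsub_def)
qed

end
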